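(* For every $C>0$, the optimal solution $w^*_C$ lies in the closed Euclidean ball $$\Big\| w^*_C - \tfrac12\Big(\hat w - \tfrac{C}{\tilde C}(g-\hat w)\Big)\Big\|^2 \le \Big(\tfrac12\Big\|\hat w + \tfrac{C}{\tilde C}(g-\hat w)\Big\|\Big)^2 .$$
   Context: Let $\{(x_i,y_i)\}_{i=1}^n\subset\mathbb R^d\times\{-1,1\}$ be a training set. Let $\ell:\{-1,1\}\times\mathbb R\to\mathbb R$ be convex in its second argument, and set $\ell_i(w):=\ell(y_i,w^\top x_i)$ for $w\in\mathbb R^d$ (a convex function on $\mathbb R^d$). For $C>0$ let $w^*_C$ be the (unique) minimizer over $w\in\mathbb R^d$ of $P_C(w)=\frac12\|w\|^2+C\sum_{i=1}^n\ell_i(w)$, where $\|\cdot\|$ is the Euclidean norm. Fix $\tilde C>0$ and an arbitrary vector $\hat w\in\mathbb R^d$ (an approximate solution for $\tilde C$); for each $i$ let $\xi_i\in\partial\ell_i(\hat w)$ be any subgradient of $\ell_i$ at $\hat w$, and set $g:=\hat w+\tilde C\sum_{i=1}^n\xi_i$ (a subgradient of $P_{\tilde C}$ at $\hat w$). *)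

theory Defs
  imports "HOL-Analysis.Analysis"
begin

definition is_subgradient :: "('a::real_inner \<Rightarrow> real) \<Rightarrow> 'a \<Rightarrow> 'a \<Rightarrow> bool" where
  "is_subgradient f w xi \<longleftrightarrow> (\<forall>v. f w + inner xi (v - w) \<le> f v)"

definition primal_obj ::
  "(real \<Rightarrow> real \<Rightarrow> real) \<Rightarrow> (nat \<Rightarrow> real ^ 'd) \<Rightarrow> (nat \<Rightarrow> real) \<Rightarrow> nat \<Rightarrow> real \<Rightarrow> real ^ 'd \<Rightarrow> real" where
  "primal_obj l x y n C w = (1/2) * (norm w)^2 + C * (\<Sum>i<n. l (y i) (inner w (x i)))"

end

theory Submission
  imports Defs
begin

theorem mainTheorem1:
  fixes l :: "real \<Rightarrow> real \<Rightarrow> real"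
    and x :: "nat \<Rightarrow> real ^ 'd"
    and y :: "nat \<Rightarrow> real"
    and n :: nat
    and Ct C :: real
    and wh ws :: "real ^ 'd"
    and xi :: "nat \<Rightarrow> real ^ 'd"
  assumes labels: "\<forall>i<n. y i \<in> {-1, 1}"
    and conv: "\<forall>s\<in>{-1, 1::real}. convex_on UNIV (l s)"
    and Ct_pos: "Ct > 0"
    and subg: "\<forall>i<n. is_subgradient (\<lambda>w. l (y i) (inner w (x i))) wh (xi i)"
    and C_pos: "C > 0"
    and opt: "\<forall>w. primal_obj l x y n C ws \<le> primal_obj l x y n C w"
  shows "let g = wh + Ct *\<^sub>R (\<Sum>i<n. xi i) in
     (norm (ws - (1/2) *\<^sub>R (wh - (C / Ct) *\<^sub>R (g - wh))))^2
       \<le> ((1/2) * norm (wh + (C / Ct) *\<^sub>R (g - wh)))^2"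
proof -
  define L where "L w = (\<Sum>i<n. l (y i) (inner w (x i)))" for w
  define s where "s = (\<Sum>i<n. xi i)"
  define d where "d = wh - ws"
  have P: "primal_obj l x y n C w = (1/2) * (norm w)^2 + C * L w" for w
    by (simp add: primal_obj_def L_def)
  have convL: "L ((1 - t) *\<^sub>R ws + t *\<^sub>R wh) \<le> (1 - t) * L ws + t * L wh"
    if t01: "0 \<le> t" "t \<le> 1" for t
  proof -
    have "l (y i) (inner ((1 - t) *\<^sub>R ws + t *\<^sub>R wh) (x i))
       \<le> (1 - t) * l (y i) (inner ws (x i)) + t * l (y i) (inner wh (x i))" if i: "i < n" for i
    proof -
      have c: "convex_on UNIV (l (y i))" using conv labels i by blast
      have "inner ((1 - t) *\<^sub>R ws + t *\<^sub>R wh) (x i) = (1 - t) *\<^sub>R inner ws (x i) + t *\<^sub>R inner wh (x i)"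
        by (simp add: inner_add_left)
      then show ?thesis using convex_onD[OF c, of t "inner ws (x i)" "inner wh (x i)"] t01
        by simp
    qed
    then have "L ((1 - t) *\<^sub>R ws + t *\<^sub>R wh) \<le> (\<Sum>i<n. (1 - t) * l (y i) (inner ws (x i)) + t * l (y i) (inner wh (x i)))"
      unfolding L_def by (intro sum_mono) auto
    also have "\<dots> = (1 - t) * L ws + t * L wh"
      by (simp add: L_def sum.distrib sum_distrib_left)
    finally show ?thesis .
  qed
  have sub: "L wh + inner s (ws - wh) \<le> L ws"
  proof -
    have "(\<Sum>i<n. l (y i) (inner wh (x i)) + inner (xi i) (ws - wh)) \<le> (\<Sum>i<n. l (y i) (inner ws (x i)))"
      using subg by (intro sum_mono) (auto simp: is_subgradient_def)
    then show ?thesis by (simp add: L_def s_def sum.distrib inner_sum_left)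
  qed
  define a where "a = inner ws d + C * inner s d"
  define b where "b = (norm d)^2 / 2"
  have key: "0 \<le> a + t * b" if t: "0 < t" "t \<le> 1" for t
  proof -
    have wt: "(1 - t) *\<^sub>R ws + t *\<^sub>R wh = ws + t *\<^sub>R d"
      by (simp add: d_def algebra_simps)
    have "(1/2) * (norm ws)^2 + C * L ws \<le> (1/2) * (norm (ws + t *\<^sub>R d))^2 + C * L (ws + t *\<^sub>R d)"
      using opt P by metis
    also have "C * L (ws + t *\<^sub>R d) \<le> C * ((1 - t) * L ws + t * L wh)"
      using convL[of t] t C_pos wt by (simp add: mult_left_mono)
    finally have 1: "(1/2) * (norm ws)^2 + C * L ws \<le> (1/2) * (norm (ws + t *\<^sub>R d))^2 + C * ((1 - t) * L ws + t * L wh)"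
      by simp
    have n2: "(norm (ws + t *\<^sub>R d))^2 = (norm ws)^2 + 2 * t * inner ws d + t^2 * (norm d)^2"
      unfolding power2_norm_eq_inner by (simp add: inner_add_left inner_add_right inner_commute power2_eq_square algebra_simps)
    have "C * t * (L wh - L ws) \<le> C * t * inner s d"
      using sub t C_pos by (intro mult_left_mono) (auto simp: d_def inner_diff_right)
    with 1 n2 have "0 \<le> t * inner ws d + t^2 * (norm d)^2 / 2 + C * t * inner s d"
      by (simp add: algebra_simps)
    then have "0 \<le> t * (a + t * b)" by (simp add: a_def b_def algebra_simps power2_eq_square)
    then show ?thesis using t by (simp add: zero_le_mult_iff)
  qed
  have b0: "b \<ge> 0" by (simp add: b_def)
  have a0: "a \<ge> 0"
  proof (rule ccontr)
    assume "\<not> 0 \<le> a"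
    then have an: "a < 0" by simp
    define t where "t = min 1 (- a / (b + 1))"
    have tp: "0 < t" "t \<le> 1" using an b0 by (auto simp: t_def divide_neg_pos)
    have "t * b \<le> (- a / (b + 1)) * b" using b0 by (intro mult_right_mono) (auto simp: t_def)
    also have "\<dots> < - a" using an b0 by (simp add: field_simps)
    finally show False using key[OF tp] by simp
  qed
  have gw: "(C / Ct) *\<^sub>R ((wh + Ct *\<^sub>R s) - wh) = C *\<^sub>R s" using Ct_pos by simp
  show ?thesis
    unfolding Let_def s_def[symmetric] gw
  proof -
    have "(norm (ws - (1/2) *\<^sub>R (wh - C *\<^sub>R s)))^2 - ((1/2) * norm (wh + C *\<^sub>R s))^2 = - a"
      unfolding power_mult_distrib power2_norm_eq_inner
      by (simp add: a_def d_def power2_eq_square inner_add_left inner_add_right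
          inner_diff_left inner_diff_right inner_commute algebra_simps)
    then show "(norm (ws - (1/2) *\<^sub>R (wh - C *\<^sub>R s)))^2 \<le> ((1/2) * norm (wh + C *\<^sub>R s))^2"
      using a0 by linarith
  qed
qed

end
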